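(* Fix a positive integer $s$, let $h_{s,i,j}$ be as in the context, and set $\mathcal{H}(s)=\sum_{i\ge 0}\sum_{j\ge i+1}h_{s,i,j}x^jz^i$. Then $$\mathcal{H}(s)=-\frac{(1-xz)^s}{1-z}-\frac{x(1-xz)^{2s}}{(1-x)^{s+1}}+\frac{(1-xz)^{2s}}{(1-x)^s(1-z)}.$$
   Context: For a fixed positive integer $s$, the numbers $h_{s,i,j}$ (integers $i\ge 0$, $j$) are defined recursively by: $h_{s,i,j}=0$ if $j\le i$; for $i=0$ and $j\ge 1$, $h_{s,0,j}=\binom{s+j-1}{j}\frac{s-j}{s}$; for $i>0$ and $j>i$, $h_{s,i,j}=-\frac{s-j+1}{i}h_{s,i-1,j-1}-\frac{j-i}{i}h_{s,i-1,j}$. The identity is of formal power series in $x,z$. *)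

theory Defs
  imports "HOL-Computational_Algebra.Formal_Power_Series"
begin

text \<open>The numbers h(s,i,j). h(s,i,j) = 0 for j <= i (only j >= 0 matters, since
  j <= i covers all negative j).\<close>
fun hnum :: "nat \<Rightarrow> nat \<Rightarrow> nat \<Rightarrow> rat" where
  "hnum s 0 j = (if j = 0 then 0
      else of_nat ((s + j - 1) choose j) * ((of_nat s - of_nat j) / of_nat s))"
| "hnum s (Suc i) j = (if j \<le> Suc i then 0
      else - ((of_nat s - of_nat j + 1) / of_nat (Suc i)) * hnum s i (j - 1)
           - ((of_nat j - of_nat (Suc i)) / of_nat (Suc i)) * hnum s i j)"

text \<open>Bivariate formal power series in x, z: power series in z whose
  coefficients are power series in x.\<close>
definition fpsX :: "rat fps fps" where "fpsX = fps_const fps_X"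
definition fpsZ :: "rat fps fps" where "fpsZ = fps_X"

definition Hser :: "nat \<Rightarrow> rat fps fps" where
  "Hser s = Abs_fps (\<lambda>i. Abs_fps (\<lambda>j. hnum s i j))"

end

theory Submission
  imports Defs
begin

unbundle fps_syntax

lemma div_mult_cancel_unit:
  fixes A B :: "rat fps fps"
  assumes "B $ 0 $ 0 \<noteq> 0"
  shows "A / B * B = A"
proof -
  have B0: "B $ 0 \<noteq> 0" using assms by auto
  have "A / B = A * inverse B" by (rule fps_divide_unit[OF B0])
  moreover have "B * inverse B = 1"
  proof -
    have "B $ 0 * inverse (B $ 0) = 1" using assms by (rule inverse_mult_eq_1')
    then have "B * fps_right_inverse B (inverse (B $ 0)) = 1" by (rule fps_right_inverse)
    then show ?thesis by (simp add: fps_inverse_def)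
  qed
  ultimately show ?thesis by (simp add: mult.assoc mult.commute)
qed

definition dx :: "rat fps fps \<Rightarrow> rat fps fps" where
  "dx f = Abs_fps (\<lambda>i. fps_deriv (f $ i))"

lemma dx_add: "dx (f + g) = dx f + dx g"
  by (simp add: dx_def fps_eq_iff)
lemma dx_diff: "dx (f - g) = dx f - dx g"
  by (simp add: dx_def fps_eq_iff)
lemma dx_uminus: "dx (- f) = - dx f"
  by (simp add: dx_def fps_eq_iff)
lemma dx_mult: "dx (f * g) = f * dx g + dx f * g"
  by (simp add: dx_def fps_eq_iff fps_mult_nth fps_deriv_sum sum.distrib)
lemma dx_fpsX: "dx fpsX = 1"
  unfolding dx_def fpsX_def by (rule fps_ext) (case_tac n, auto)
lemma dx_fpsZ: "dx fpsZ = 0"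
  by (simp add: dx_def fpsZ_def fps_eq_iff fps_X_def)
lemma dx_one: "dx 1 = 0"
  by (simp add: dx_def fps_eq_iff)

definition DD :: "rat fps fps \<Rightarrow> rat fps fps" where
  "DD f = (1 - fpsZ) * fps_deriv f + fpsX * (1 - fpsX) * dx f"

lemma DD_add: "DD (f + g) = DD f + DD g"
  by (simp add: DD_def dx_add algebra_simps)
lemma DD_diff: "DD (f - g) = DD f - DD g"
  by (simp add: DD_def dx_diff algebra_simps)
lemma DD_uminus: "DD (- f) = - DD f"
  by (simp add: DD_def dx_uminus algebra_simps)
lemma DD_mult: "DD (f * g) = f * DD g + DD f * g"
  by (simp add: DD_def dx_mult algebra_simps)
lemma DD_one: "DD 1 = 0"
  by (simp add: DD_def dx_one)
lemma DD_fpsX: "DD fpsX = fpsX * (1 - fpsX)"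
proof -
  have "fps_deriv fpsX = 0" by (simp add: fpsX_def)
  then show ?thesis by (simp add: DD_def dx_fpsX)
qed
lemma DD_fpsZ: "DD fpsZ = 1 - fpsZ"
proof -
  have "fps_deriv fpsZ = 1" by (simp add: fpsZ_def)
  then show ?thesis by (simp add: DD_def dx_fpsZ)
qed

lemma DD_power:
  assumes "DD f = c * f"
  shows "DD (f ^ n) = of_nat n * c * f ^ n"
proof (induction n)
  case 0 then show ?case by (simp add: DD_one)
next
  case (Suc n)
  then show ?case by (simp add: DD_mult assms algebra_simps)
qed

lemma DD_nth: "DD f $ i = of_nat (Suc i) * f $ Suc i - of_nat i * f $ i
   + fps_X * (1 - fps_X) * fps_deriv (f $ i)"
proof -
  have e1: "1 - fps_const fps_X = fps_const (1 - (fps_X :: rat fps))"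
    by (metis fps_const_1_eq_1 fps_const_sub)
  have e: "fpsX * (1 - fpsX) = fps_const (fps_X * (1 - fps_X))"
    by (simp add: fpsX_def e1)
  have "DD f = fps_deriv f - fps_X * fps_deriv f + (fpsX * (1 - fpsX)) * dx f"
    by (simp add: DD_def fpsZ_def algebra_simps)
  then have "DD f = fps_deriv f - fps_X * fps_deriv f + fps_const (fps_X * (1 - fps_X)) * dx f"
    by (simp only: e)
  then have "DD f $ i = fps_deriv f $ i - (fps_X * fps_deriv f) $ i + fps_X * (1 - fps_X) * fps_deriv (f $ i)"
    by (simp only: fps_add_nth fps_sub_nth fps_mult_left_const_nth dx_def fps_nth_Abs_fps)
  then show ?thesis by (cases i) (simp_all add: algebra_simps)
qed

lemma uniq:
  assumes "DD P = fps_const c * P" "P $ 0 = 0"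
  shows "P = 0"
proof -
  have "P $ i = 0" for i
  proof (induction i)
    case 0 then show ?case using assms(2) .
  next
    case (Suc i)
    have "DD P $ i = c * P $ i" using assms(1) by simp
    then have "of_nat (Suc i) * P $ Suc i = 0" using Suc by (simp add: DD_nth)
    then show ?case by (simp del: of_nat_Suc)
  qed
  then show ?thesis by (simp add: fps_eq_iff)
qed

lemma hnum_zero: "j \<le> i \<Longrightarrow> hnum s i j = 0"
  by (cases i) auto

lemma hrec: "of_nat (Suc i) * hnum s (Suc i) j = (of_nat i + 1 - of_nat j) * hnum s i j
   - (if j = 0 then 0 else (of_nat s - of_nat j + 1) * hnum s i (j - 1))"
proof (cases "j \<le> Suc i")
  case True
  then have "hnum s (Suc i) j = 0" by (rule hnum_zero)
  moreover have "(of_nat i + 1 - of_nat j) * hnum s i j = 0"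
  proof (cases "j \<le> i")
    case True then show ?thesis by (simp add: hnum_zero)
  next
    case False then have "j = Suc i" using \<open>j \<le> Suc i\<close> by simp
    then show ?thesis by simp
  qed
  moreover have "j \<noteq> 0 \<Longrightarrow> hnum s i (j - 1) = 0" using True by (intro hnum_zero) simp
  ultimately show ?thesis by (simp add: hnum_zero)
next
  case False
  then have j: "j \<noteq> 0" "\<not> j \<le> Suc i" by auto
  have "of_nat (Suc i) * hnum s (Suc i) j = of_nat (Suc i) * (- ((of_nat s - of_nat j + 1) / of_nat (Suc i)) * hnum s i (j - 1)
           - ((of_nat j - of_nat (Suc i)) / of_nat (Suc i)) * hnum s i j)"
    using j by simp
  also have "\<dots> = (of_nat i + 1 - of_nat j) * hnum s i j - (of_nat s - of_nat j + 1) * hnum s i (j - 1)"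
    by (simp add: field_simps del: of_nat_Suc) (simp add: algebra_simps)
  finally show ?thesis using j by simp
qed

lemma nth_X1X: "(fps_X * (1 - fps_X) * (g :: rat fps)) $ j =
   (if j = 0 then 0 else g $ (j - 1)) - (if j \<le> 1 then 0 else g $ (j - 2))"
proof -
  have "fps_X * (1 - fps_X) * g = fps_X * g - fps_X * (fps_X * g)" by (simp add: algebra_simps)
  then show ?thesis by (cases j) (auto simp: numeral_2_eq_2)
qed

lemma nth_1sX: "((1 - of_nat s * fps_X) * (g :: rat fps)) $ j =
   g $ j - of_nat s * (if j = 0 then 0 else g $ (j - 1))"
proof -
  have "(1 - of_nat s * fps_X) * g = g - fps_const (of_nat s) * (fps_X * g)"
    by (simp add: algebra_simps fps_of_nat)
  then show ?thesis by simp
qed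

lemma nth_ofnat: "(of_nat n * (g :: rat fps)) $ j = of_nat n * g $ j"
  by (simp flip: fps_of_nat)

lemma nth_deriv': "fps_deriv g $ j = of_nat (Suc j) * (g :: rat fps) $ Suc j"
  by simp

lemma Hser_ode: "DD (Hser s) = fps_const (1 - of_nat s * fps_X) * Hser s"
proof (rule fps_ext)
  fix i
  show "DD (Hser s) $ i = (fps_const (1 - of_nat s * fps_X) * Hser s) $ i"
  proof (rule fps_ext)
    fix j
    show "DD (Hser s) $ i $ j = (fps_const (1 - of_nat s * fps_X) * Hser s) $ i $ j"
    proof (cases j)
      case 0
      then show ?thesis using hrec[of i s 0]
        by (simp add: DD_nth Hser_def nth_X1X nth_1sX nth_ofnat algebra_simps del: hnum.simps)
    next
      case (Suc k)
      then show ?thesis using hrec[of i s j]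
        by (cases k) (simp_all add: DD_nth Hser_def nth_X1X nth_1sX nth_ofnat algebra_simps del: hnum.simps)
    qed
  qed
qed

definition cser :: "nat \<Rightarrow> rat fps" where
  "cser t = Abs_fps (\<lambda>j. of_nat ((t + j) choose j))"

lemma nth_1X: "((1 - fps_X) * (g :: rat fps)) $ j = g $ j - (if j = 0 then 0 else g $ (j - 1))"
proof -
  have "(1 - fps_X) * g = g - fps_X * g" by (simp add: algebra_simps)
  then show ?thesis by simp
qed

lemma cser_step: "(1 - fps_X) * cser (Suc t) = cser t"
proof (rule fps_ext)
  fix j show "((1 - fps_X) * cser (Suc t)) $ j = cser t $ j"
    by (cases j) (simp_all add: nth_1X cser_def)
qed

lemma cser_inv: "(1 - fps_X) ^ Suc t * cser t = 1"
proof (induction t)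
  case 0
  show ?case
  proof (rule fps_ext)
    fix j show "((1 - fps_X) ^ Suc 0 * cser 0) $ j = (1 :: rat fps) $ j"
      by (cases j) (simp_all add: nth_1X cser_def)
  qed
next
  case (Suc t)
  have "(1 - fps_X) ^ Suc (Suc t) * cser (Suc t) = (1 - fps_X) ^ Suc t * ((1 - fps_X) * cser (Suc t))"
    by (simp add: algebra_simps)
  also have "\<dots> = (1 - fps_X) ^ Suc t * cser t" by (simp only: cser_step)
  also have "\<dots> = 1" by (rule Suc.IH)
  finally show ?case .
qed

lemma binom_aux: "of_nat s * rat_of_nat ((s + k) choose k) = of_nat (Suc k) * of_nat ((s + k) choose Suc k)"
proof -
  have "s * ((s + k) choose k) = (s + k) * ((s + k - 1) choose k)"
    using binomial_absorb_comp[of "s + k" k] by simp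
  moreover have "Suc k * ((s + k) choose Suc k) = (s + k) * ((s + k - 1) choose k)"
    using times_binomial_minus1_eq[of "Suc k" "s + k"] by simp
  ultimately have "s * ((s + k) choose k) = Suc k * ((s + k) choose Suc k)" by simp
  then show ?thesis by (metis of_nat_mult)
qed

lemma h0: assumes "s > 0"
  shows "Abs_fps (hnum s 0) = cser (s - 1) - fps_X * cser s - 1"
proof (rule fps_ext)
  fix j
  show "Abs_fps (hnum s 0) $ j = (cser (s - 1) - fps_X * cser s - 1) $ j"
  proof (cases j)
    case 0 then show ?thesis by (simp add: cser_def)
  next
    case (Suc k)
    have e: "s - 1 + Suc k = s + k" using assms by simp
    have "of_nat ((s + k) choose Suc k) * ((of_nat s - of_nat (Suc k)) / of_nat s)
        = of_nat ((s + k) choose Suc k) - (rat_of_nat ((s + k) choose k))"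
      using binom_aux[of s k] assms by (simp add: field_simps)
    then show ?thesis using Suc assms by (simp add: cser_def e add.commute)
  qed
qed

lemma DD_U: "DD (1 - fpsX * fpsZ) = (- fpsX) * (1 - fpsX * fpsZ)"
  by (simp add: DD_diff DD_one DD_mult DD_fpsX DD_fpsZ algebra_simps)

lemma DD_W: "DD (1 - fpsX) = (- fpsX) * (1 - fpsX)"
  by (simp add: DD_diff DD_one DD_fpsX algebra_simps)

lemma DD_Z: "DD (1 - fpsZ) = (- 1) * (1 - fpsZ)"
  by (simp add: DD_diff DD_one DD_fpsZ algebra_simps)

lemma DD_N: "DD (- ((1 - fpsX * fpsZ) ^ s * (1 - fpsX) ^ (s + 1))
      - fpsX * (1 - fpsX * fpsZ) ^ (2 * s) * (1 - fpsZ) + (1 - fpsX * fpsZ) ^ (2 * s) * (1 - fpsX))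
   = (- of_nat (2 * s + 1) * fpsX) * (- ((1 - fpsX * fpsZ) ^ s * (1 - fpsX) ^ (s + 1))
      - fpsX * (1 - fpsX * fpsZ) ^ (2 * s) * (1 - fpsZ) + (1 - fpsX * fpsZ) ^ (2 * s) * (1 - fpsX))"
proof -
  define U where "U = 1 - fpsX * fpsZ"
  define W where "W = 1 - fpsX"
  define Y where "Y = 1 - fpsZ"
  have dU: "DD U = (- fpsX) * U" unfolding U_def by (rule DD_U)
  have dW: "DD W = (- fpsX) * W" unfolding W_def by (rule DD_W)
  have dY: "DD Y = (- 1) * Y" unfolding Y_def by (rule DD_Z)
  have dX: "DD fpsX = fpsX * W" unfolding W_def by (rule DD_fpsX)
  have t1: "DD (U ^ s * W ^ (s + 1)) = (- of_nat (2 * s + 1) * fpsX) * (U ^ s * W ^ (s + 1))"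
    by (simp only: DD_mult DD_power[OF dU] DD_power[OF dW]) (simp add: algebra_simps)
  have t2: "DD (fpsX * U ^ (2 * s) * Y) = (- of_nat (2 * s + 1) * fpsX) * (fpsX * U ^ (2 * s) * Y)"
    by (simp only: DD_mult DD_power[OF dU] dX dY) (simp add: W_def algebra_simps)
  have t3: "DD (U ^ (2 * s) * W) = (- of_nat (2 * s + 1) * fpsX) * (U ^ (2 * s) * W)"
    by (simp only: DD_mult DD_power[OF dU] dW) (simp add: algebra_simps)
  have "DD (- (U ^ s * W ^ (s + 1)) - fpsX * U ^ (2 * s) * Y + U ^ (2 * s) * W)
     = (- of_nat (2 * s + 1) * fpsX) * (- (U ^ s * W ^ (s + 1)) - fpsX * U ^ (2 * s) * Y + U ^ (2 * s) * W)"
    by (simp only: DD_add DD_diff DD_uminus t1 t2 t3) (simp add: algebra_simps)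
  then show ?thesis by (simp only: U_def W_def Y_def)
qed

lemma fpsX_nth [simp]: "fpsX $ i = (if i = 0 then fps_X else 0)"
  by (simp add: fpsX_def)
lemma fpsZ_nth0 [simp]: "fpsZ $ 0 = 0"
  by (simp add: fpsZ_def)

lemma const_1sX: "fps_const (1 - of_nat s * fps_X) = 1 - of_nat s * fpsX"
  by (simp add: fpsX_def fps_of_nat[symmetric] fps_const_1_eq_1[symmetric] del: fps_const_1_eq_1)

lemma const_c: "fps_const (- of_nat (2 * s + 1) * fps_X) = - of_nat (2 * s + 1) * fpsX"
  by (simp add: fpsX_def fps_of_nat[symmetric])

theorem proposition14:
  fixes s :: nat
  assumes "s > 0"
  shows "Hser s =
      - ((1 - fpsX * fpsZ) ^ s / (1 - fpsZ))
      - fpsX * (1 - fpsX * fpsZ) ^ (2 * s) / (1 - fpsX) ^ (s + 1)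
      + (1 - fpsX * fpsZ) ^ (2 * s) / ((1 - fpsX) ^ s * (1 - fpsZ))"
proof -
  define U where "U = 1 - fpsX * fpsZ"
  define W where "W = 1 - fpsX"
  define Y where "Y = 1 - fpsZ"
  define Den where "Den = W ^ (s + 1) * Y"
  define N where "N = - (U ^ s * W ^ (s + 1)) - fpsX * U ^ (2 * s) * Y + U ^ (2 * s) * W"
  define P where "P = Hser s * Den - N"
  have dU: "DD U = (- fpsX) * U" unfolding U_def by (rule DD_U)
  have dW: "DD W = (- fpsX) * W" unfolding W_def by (rule DD_W)
  have dY: "DD Y = (- 1) * Y" unfolding Y_def by (rule DD_Z)
  have dN: "DD N = (- of_nat (2 * s + 1) * fpsX) * N"
    unfolding N_def U_def W_def Y_def by (rule DD_N)
  have dDen: "DD Den = (- 1 - of_nat (s + 1) * fpsX) * Den"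
    unfolding Den_def by (simp only: DD_mult DD_power[OF dW] dY) (simp add: algebra_simps)
  have dH: "DD (Hser s) = (1 - of_nat s * fpsX) * Hser s"
    using Hser_ode[of s] by (simp only: const_1sX)
  have "DD P = (- of_nat (2 * s + 1) * fpsX) * P"
    unfolding P_def by (simp only: DD_diff DD_mult dH dDen dN) (simp add: algebra_simps)
  then have dP: "DD P = fps_const (- of_nat (2 * s + 1) * fps_X) * P"
    by (simp only: const_c)
  have P0: "P $ 0 = 0"
  proof -
    have H0: "Hser s $ 0 = cser (s - 1) - fps_X * cser s - 1"
      using h0[OF assms] by (simp add: Hser_def)
    have sS: "Suc (s - 1) = s" using assms by simp
    have i1: "(1 - fps_X) ^ s * cser (s - 1) = (1 :: rat fps)"
      using cser_inv[of "s - 1"] by (simp only: sS)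
    have i2: "(1 - fps_X) ^ (s + 1) * cser s = (1 :: rat fps)"
      using cser_inv[of s] by simp
    have "P $ 0 = (cser (s - 1) - fps_X * cser s - 1) * (1 - fps_X) ^ (s + 1)
        - (- ((1 - fps_X) ^ (s + 1)) - fps_X + (1 - fps_X))"
      by (simp add: P_def H0 Den_def N_def U_def W_def Y_def fps_power_zeroth)
    also have "\<dots> = (1 - fps_X) * ((1 - fps_X) ^ s * cser (s - 1)) - fps_X * ((1 - fps_X) ^ (s + 1) * cser s)
        - (1 - fps_X) ^ (s + 1) + ((1 - fps_X) ^ (s + 1)) + fps_X - (1 - fps_X)"
      by (simp add: algebra_simps)
    also have "\<dots> = 0" by (simp only: i1 i2) simp
    finally show ?thesis .
  qed
  have HD: "Hser s * Den = N" using uniq[OF dP P0] unfolding P_def by simp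
  have c1: "U ^ s / Y * Y = U ^ s"
    by (rule div_mult_cancel_unit) (simp add: Y_def)
  have c2: "fpsX * U ^ (2 * s) / W ^ (s + 1) * W ^ (s + 1) = fpsX * U ^ (2 * s)"
    by (rule div_mult_cancel_unit) (simp add: W_def fps_power_zeroth)
  have c3: "U ^ (2 * s) / (W ^ s * Y) * (W ^ s * Y) = U ^ (2 * s)"
    by (rule div_mult_cancel_unit) (simp add: W_def Y_def fps_power_zeroth)
  have GD: "(- (U ^ s / Y) - fpsX * U ^ (2 * s) / W ^ (s + 1) + U ^ (2 * s) / (W ^ s * Y)) * Den = N"
  proof -
    have "(- (U ^ s / Y) - fpsX * U ^ (2 * s) / W ^ (s + 1) + U ^ (2 * s) / (W ^ s * Y)) * Den
      = - ((U ^ s / Y * Y) * W ^ (s + 1)) - (fpsX * U ^ (2 * s) / W ^ (s + 1) * W ^ (s + 1)) * Y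
        + (U ^ (2 * s) / (W ^ s * Y) * (W ^ s * Y)) * W"
      unfolding Den_def by (simp add: algebra_simps)
    also have "\<dots> = N" unfolding N_def by (simp only: c1 c2 c3)
    finally show ?thesis .
  qed
  have Den0: "Den \<noteq> 0"
  proof
    assume "Den = 0"
    then have "Den $ 0 $ 0 = 0" by simp
    then show False by (simp add: Den_def W_def Y_def fps_power_zeroth)
  qed
  from HD GD Den0 have "Hser s = - (U ^ s / Y) - fpsX * U ^ (2 * s) / W ^ (s + 1) + U ^ (2 * s) / (W ^ s * Y)"
    by (metis mult_right_cancel)
  then show ?thesis by (simp only: U_def W_def Y_def)
qed

end
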